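(* Fix $k\in[K]$, a joint law $P_{X,A}$ of $(x,A)$ under which $H_k$ is almost surely invertible and $\mathbb{E}(H_k^{-1})$ is finite, a positive definite $\Sigma\in\mathbb{R}^{K\times K}$, and $\sigma_{\max}>0$. Let $\mathcal{P}_k$ be the class of data-generating mechanisms in which $(x,A)\sim P_{X,A}$, $b^*\in\mathbb{R}^K$ is arbitrary, and for each $i$ with $\psi_i=k$, $y_i=(M_kb^* )_i+\epsilon_i$, where conditionally on $(x,A)$ the $\epsilon_i$ have mean zero, are uncorrelated, and satisfy $\mathbb{E}(\epsilon_i^2\mid x,A)\le\sigma_{\max}^2$. Then $$\inf_{\bar\beta}\ \sup_{\mathcal{P}_k}\ \mathbb{E}\big(\|\bar\beta-b^*\|_\Sigma^2\big)=\sigma_{\max}^2\,\mathrm{tr}\big(\Sigma\,\mathbb{E}(H_k^{-1})\big),$$ where the infimum is over all estimators $\bar\beta\in\mathbb{R}^K$ that are measurable functions of the data $(x,A,(y_i)_{i:\psi_i=k})$, and $\|v\|_\Sigma^2=v^\top\Sigma v$.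
   Context: Let $n\ge2$, $K\ge1$, $Z\in\{0,1\}^{n\times K}$ a community membership matrix (each row exactly one $1$), $\psi_i$ the community of node $i$. $A\in\{0,1\}^{n\times n}$ is a random symmetric adjacency matrix, $x\in\mathbb{R}^n$ a random covariate vector. $*$ is the Hadamard product, $1_n$ the all-ones vector. $M_k=\mathrm{diag}(Z_{\cdot,k})(1_nx^\top*A)Z\in\mathbb{R}^{n\times K}$ and $H_k=M_k^\top M_k$. *)

theory Defs
  imports "HOL-Probability.Probability"
begin

text \<open>Nodes are indexed by a finite type 'n (n = CARD('n)), communities by a finite
type 'k (K = CARD('k)).  The membership matrix Z is determined by the community
map psi : 'n => 'k (row i of Z has its single 1 in column psi i).\<close>

definition Zmat :: "('n \<Rightarrow> 'k) \<Rightarrow> real^'k^'n" where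
  "Zmat psi = (\<chi> i l. if psi i = l then 1 else 0)"

definition diag_vec :: "real^'n \<Rightarrow> real^'n^'n" where
  "diag_vec v = (\<chi> i j. if i = j then v $ i else 0)"

definition hadamard :: "real^'b^'a \<Rightarrow> real^'b^'a \<Rightarrow> real^'b^'a" where
  "hadamard P Q = (\<chi> i j. P $ i $ j * Q $ i $ j)"

definition outer :: "real^'a \<Rightarrow> real^'b \<Rightarrow> real^'b^'a" where
  "outer u v = (\<chi> i j. u $ i * v $ j)"

definition Mmat :: "('n \<Rightarrow> 'k) \<Rightarrow> 'k \<Rightarrow> real^'n \<Rightarrow> real^'n^'n \<Rightarrow> real^'k^'n" where
  "Mmat psi k x A =
     diag_vec (column k (Zmat psi)) ** hadamard (outer (\<chi> i. 1) x) A ** Zmat psi"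

definition Hmat :: "('n \<Rightarrow> 'k) \<Rightarrow> 'k \<Rightarrow> real^'n \<Rightarrow> real^'n^'n \<Rightarrow> real^'k^'k" where
  "Hmat psi k x A = transpose (Mmat psi k x A) ** Mmat psi k x A"

definition pos_def :: "real^'k^'k \<Rightarrow> bool" where
  "pos_def S \<longleftrightarrow> transpose S = S \<and> (\<forall>v. v \<noteq> 0 \<longrightarrow> v \<bullet> (S *v v) > 0)"

definition sqnorm_S :: "real^'k^'k \<Rightarrow> real^'k \<Rightarrow> real" where
  "sqnorm_S S v = v \<bullet> (S *v v)"

text \<open>Observed responses: only the coordinates y_i with psi i = k are observed;
the others are masked to 0 (so an estimator can only depend on (y_i)_{psi_i = k}).\<close>
definition mask :: "('n \<Rightarrow> 'k) \<Rightarrow> 'k \<Rightarrow> real^'n \<Rightarrow> real^'n" where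
  "mask psi k y = (\<chi> i. if psi i = k then y $ i else 0)"

definition mat_expect :: "'a measure \<Rightarrow> ('a \<Rightarrow> real^'k^'k) \<Rightarrow> real^'k^'k" where
  "mat_expect P F = (\<chi> i j. integral\<^sup>L P (\<lambda>w. F w $ i $ j))"

definition noise_ok ::
  "((real^'n) \<times> (real^'n^'n)) measure \<Rightarrow> ('n \<Rightarrow> 'k) \<Rightarrow> 'k \<Rightarrow> real
     \<Rightarrow> ((real^'n) \<times> (real^'n^'n) \<Rightarrow> (real^'n) measure) \<Rightarrow> bool" where
  "noise_ok P psi k \<sigma> \<kappa> \<longleftrightarrow>
     \<kappa> \<in> P \<rightarrow>\<^sub>M subprob_algebra borel \<and>
     (AE w in P. prob_space (\<kappa> w) \<and>
        (\<forall>i. psi i = k \<longrightarrow>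
            integrable (\<kappa> w) (\<lambda>e. (e $ i)\<^sup>2) \<and>
            integral\<^sup>L (\<kappa> w) (\<lambda>e. e $ i) = 0 \<and>
            integral\<^sup>L (\<kappa> w) (\<lambda>e. (e $ i)\<^sup>2) \<le> \<sigma>\<^sup>2) \<and>
        (\<forall>i j. psi i = k \<longrightarrow> psi j = k \<longrightarrow> i \<noteq> j \<longrightarrow>
            integral\<^sup>L (\<kappa> w) (\<lambda>e. e $ i * e $ j) = 0))"

definition risk ::
  "((real^'n) \<times> (real^'n^'n)) measure \<Rightarrow> ('n \<Rightarrow> 'k) \<Rightarrow> 'k \<Rightarrow> real^'k^'k
     \<Rightarrow> ((real^'n) \<times> (real^'n^'n) \<times> (real^'n) \<Rightarrow> real^'k)
     \<Rightarrow> real^'k \<Rightarrow> ((real^'n) \<times> (real^'n^'n) \<Rightarrow> (real^'n) measure) \<Rightarrow> ennreal" where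
  "risk P psi k S est b \<kappa> =
     (\<integral>\<^sup>+ w. (\<integral>\<^sup>+ e. ennreal (sqnorm_S S
          (est (fst w, snd w, mask psi k (Mmat psi k (fst w) (snd w) *v b + e)) - b))
        \<partial>(\<kappa> w)) \<partial>P)"

end

theory Submission
  imports Defs
begin


lemma diag_mult: "(diag_vec d ** B) $ i $ j = d $ i * B $ i $ j"
proof -
  have "(diag_vec d ** B) $ i $ j = (\<Sum>l\<in>UNIV. (if i = l then d $ i else 0) * B $ l $ j)"
    by (simp add: matrix_matrix_mult_def diag_vec_def)
  also have "\<dots> = (\<Sum>l\<in>UNIV. if i = l then d $ i * B $ l $ j else 0)"
    by (rule sum.cong) auto
  finally show ?thesis by simp
qed

lemma Mmat_nth:
  "Mmat psi k x A $ i $ l = (if psi i = k then (\<Sum>j\<in>UNIV. if psi j = l then x $ j * A $ i $ j else 0) else 0)"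
proof -
  have "Mmat psi k x A $ i $ l = (\<Sum>j\<in>UNIV. (diag_vec (column k (Zmat psi)) ** hadamard (outer (\<chi> i. 1) x) A) $ i $ j * Zmat psi $ j $ l)"
    unfolding Mmat_def by (simp add: matrix_matrix_mult_def)
  also have "\<dots> = (\<Sum>j\<in>UNIV. (if psi i = k then 1 else 0) * (x $ j * A $ i $ j) * (if psi j = l then 1 else 0))"
    by (simp add: diag_mult column_def Zmat_def hadamard_def outer_def)
  also have "\<dots> = (if psi i = k then (\<Sum>j\<in>UNIV. if psi j = l then x $ j * A $ i $ j else 0) else 0)"
    by (auto intro: sum.cong)
  finally show ?thesis .
qed

lemma Mmat_row0: "psi i \<noteq> k \<Longrightarrow> Mmat psi k x A $ i = 0"
  by (simp add: vec_eq_iff Mmat_nth)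




definition Bm :: "real^'k^'n \<Rightarrow> real^'n^'k" where
  "Bm M = matrix_inv (transpose M ** M) ** transpose M"
definition Cm :: "real^'k^'k \<Rightarrow> real^'k^'n \<Rightarrow> real^'n^'n" where
  "Cm S M = transpose (Bm M) ** S ** Bm M"

lemma inv_props:
  fixes H :: "real^'k^'k"
  assumes "invertible H"
  shows "H ** matrix_inv H = mat 1" "matrix_inv H ** H = mat 1"
proof -
  have "\<exists>A'. H ** A' = mat 1 \<and> A' ** H = mat 1" using assms by (simp add: invertible_def)
  then have "H ** matrix_inv H = mat 1 \<and> matrix_inv H ** H = mat 1"
    unfolding matrix_inv_def by (rule someI_ex)
  then show "H ** matrix_inv H = mat 1" "matrix_inv H ** H = mat 1" by auto
qed

lemma inv_sym:
  fixes H :: "real^'k^'k"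
  assumes "invertible H" "transpose H = H"
  shows "transpose (matrix_inv H) = matrix_inv H"
proof -
  let ?G = "matrix_inv H"
  have "transpose ?G ** H = mat 1"
    by (metis assms(2) inv_props(1)[OF assms(1)] matrix_transpose_mul transpose_mat)
  then have "transpose ?G = transpose ?G ** (H ** ?G)"
    by (simp add: inv_props[OF assms(1)])
  also have "\<dots> = (transpose ?G ** H) ** ?G" by (simp add: matrix_mul_assoc)
  also have "\<dots> = ?G" using \<open>transpose ?G ** H = mat 1\<close> by simp
  finally show ?thesis .
qed

lemma BBt:
  fixes M :: "real^'k^'n"
  assumes "invertible (transpose M ** M)"
  shows "Bm M ** transpose (Bm M) = matrix_inv (transpose M ** M)"
proof -
  let ?H = "transpose M ** M" let ?G = "matrix_inv ?H"
  have sym: "transpose ?G = ?G" using inv_sym[OF assms] by (simp add: matrix_transpose_mul)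
  have "Bm M ** transpose (Bm M) = ?G ** (transpose M ** M) ** transpose ?G"
    by (simp add: Bm_def matrix_transpose_mul matrix_mul_assoc)
  also have "\<dots> = ?G" using sym inv_props(2)[OF assms] by simp
  finally show ?thesis .
qed

lemma trace_C:
  fixes M :: "real^'k^'n"
  assumes "invertible (transpose M ** M)"
  shows "trace (Cm S M) = trace (S ** matrix_inv (transpose M ** M))"
proof -
  have "trace (Cm S M) = trace ((transpose (Bm M) ** S) ** Bm M)" by (simp add: Cm_def)
  also have "\<dots> = trace (Bm M ** (transpose (Bm M) ** S))" by (rule trace_mul_sym)
  also have "\<dots> = trace ((Bm M ** transpose (Bm M)) ** S)" by (simp add: matrix_mul_assoc)
  also have "\<dots> = trace (S ** (Bm M ** transpose (Bm M)))" by (rule trace_mul_sym)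
  finally show ?thesis using BBt[OF assms] by simp
qed

lemma quad_form: "e \<bullet> (C *v e) = (\<Sum>i\<in>UNIV. \<Sum>j\<in>UNIV. e $ i * e $ j * C $ i $ j)"
  by (simp add: inner_vec_def matrix_vector_mult_def sum_distrib_left mult_ac)

lemma inner_transpose: "(x::real^'n) \<bullet> (transpose A *v y) = (A *v x) \<bullet> y"
  apply (simp add: inner_vec_def matrix_vector_mult_def transpose_def sum_distrib_left sum_distrib_right)
  apply (subst sum.swap)
  apply (simp add: mult_ac)
  done

lemma sq_B: "sqnorm_S S (Bm M *v e) = e \<bullet> (Cm S M *v e)"
proof -
  have "Cm S M *v e = transpose (Bm M) *v (S *v (Bm M *v e))"
    by (simp only: Cm_def matrix_vector_mul_assoc matrix_mul_assoc)
  then show ?thesis unfolding sqnorm_S_def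
    by (simp only: inner_transpose)
qed

lemma delta2: fixes i :: "'n::finite" shows "(\<Sum>a\<in>UNIV. \<Sum>b\<in>UNIV. (if a = i then 1 else 0) * (if b = i then 1 else 0) * (f a b::real)) = f i i"
proof -
  have "\<And>a b. (if a = i then 1 else 0) * (if b = i then 1 else 0) * (f a b::real) = (if a = i then (if b = i then f a b else 0) else 0)"
    by simp
  moreover have "\<And>a. (\<Sum>b\<in>UNIV. if a = i then (if b = i then f a b else 0) else 0) = (if a = i then f a i else 0)"
    by (case_tac "a = i") (simp_all add: sum.delta)
  ultimately show ?thesis by simp
qed

lemma psd: "pos_def S \<Longrightarrow> v \<bullet> (S *v v) \<ge> 0"
  unfolding pos_def_def by (cases "v = 0") (auto intro: less_imp_le)

lemma C_diag_nonneg: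
  assumes "pos_def S" shows "Cm S M $ i $ i \<ge> 0"
proof -
  have "axis i 1 \<bullet> (Cm S M *v axis i 1) = Cm S M $ i $ i"
    unfolding quad_form by (simp only: axis_def vec_lambda_beta delta2)
  then show ?thesis using psd[OF assms, of "Bm M *v axis i 1"] sq_B[of S M "axis i 1"]
    by (simp add: sqnorm_S_def)
qed

lemma Bm_col0:
  assumes "M $ i = 0" shows "Bm M $ a $ i = 0"
  using assms by (simp add: Bm_def matrix_matrix_mult_def transpose_def vec_eq_iff)

lemma C_zero:
  assumes "M $ i = 0" shows "Cm S M $ i $ j = 0" "Cm S M $ j $ i = 0"
  using Bm_col0[OF assms]
  by (simp_all add: Cm_def matrix_matrix_mult_def transpose_def)




lemma nth_meas_raw[measurable (raw)]:
  fixes f :: "'a \<Rightarrow> 'b::euclidean_space^'n"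
  assumes "f \<in> borel_measurable M"
  shows "(\<lambda>x. f x $ i) \<in> borel_measurable M"
proof -
  have "(\<lambda>x::'b^'n. x $ i) \<in> borel_measurable borel"
    by (intro borel_measurable_continuous_onI linear_continuous_on bounded_linear_vec_nth)
  from measurable_compose[OF assms this] show ?thesis by simp
qed

lemma vec_meas:
  fixes f :: "'a \<Rightarrow> 'b::euclidean_space^'n"
  assumes "\<And>i. (\<lambda>x. f x $ i) \<in> borel_measurable M"
  shows "f \<in> borel_measurable M"
proof (subst borel_measurable_euclidean_space, intro ballI)
  fix b :: "'b^'n" assume "b \<in> Basis"
  then obtain i u where bu: "b = axis i u" "u \<in> Basis" by (auto simp: Basis_vec_def)
  have "(\<lambda>x. f x $ i \<bullet> u) \<in> borel_measurable M"
    using assms[of i] by measurable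
  then show "(\<lambda>x. f x \<bullet> b) \<in> borel_measurable M" by (simp add: bu inner_axis)
qed

lemma mat_meas:
  fixes f :: "'a \<Rightarrow> real^'m^'n"
  assumes "\<And>i j. (\<lambda>x. f x $ i $ j) \<in> borel_measurable M"
  shows "f \<in> borel_measurable M"
  by (intro vec_meas assms)

lemma mm_meas[measurable (raw)]:
  fixes A :: "'a \<Rightarrow> real^'m^'n" and B :: "'a \<Rightarrow> real^'p^'m"
  assumes "A \<in> borel_measurable M" "B \<in> borel_measurable M"
  shows "(\<lambda>x. A x ** B x) \<in> borel_measurable M"
  by (rule mat_meas) (simp add: matrix_matrix_mult_def, use assms in measurable)

lemma mv_meas[measurable (raw)]:
  fixes A :: "'a \<Rightarrow> real^'m^'n" and v :: "'a \<Rightarrow> real^'m"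
  assumes "A \<in> borel_measurable M" "v \<in> borel_measurable M"
  shows "(\<lambda>x. A x *v v x) \<in> borel_measurable M"
  by (rule vec_meas) (simp add: matrix_vector_mult_def, use assms in measurable)

lemma tr_meas[measurable (raw)]:
  fixes A :: "'a \<Rightarrow> real^'m^'n"
  assumes "A \<in> borel_measurable M"
  shows "(\<lambda>x. transpose (A x)) \<in> borel_measurable M"
  by (rule mat_meas) (simp add: transpose_def, use assms in measurable)

lemma trace_meas[measurable (raw)]:
  fixes A :: "'a \<Rightarrow> real^'n^'n"
  assumes "A \<in> borel_measurable M"
  shows "(\<lambda>x. trace (A x)) \<in> borel_measurable M"
  unfolding trace_def using assms by measurable

lemma mask_meas[measurable (raw)]:
  assumes "f \<in> borel_measurable M"
  shows "(\<lambda>x. mask psi k (f x)) \<in> borel_measurable M"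
  by (rule vec_meas) (simp add: mask_def, use assms in measurable)

lemma sqnorm_meas[measurable (raw)]:
  assumes "f \<in> borel_measurable M"
  shows "(\<lambda>x. sqnorm_S S (f x)) \<in> borel_measurable M"
  unfolding sqnorm_S_def using assms by measurable

lemma pair_borel_meas[measurable (raw)]:
  fixes f :: "'a \<Rightarrow> 'b::second_countable_topology" and g :: "'a \<Rightarrow> 'c::second_countable_topology"
  assumes "f \<in> borel_measurable M" "g \<in> borel_measurable M"
  shows "(\<lambda>x. (f x, g x)) \<in> borel_measurable M"
  by (subst borel_prod[symmetric]) (rule measurable_Pair[OF assms])

lemma fst_borel_meas[measurable (raw)]:
  fixes f :: "'a \<Rightarrow> 'b::second_countable_topology \<times> 'c::second_countable_topology"
  assumes "f \<in> borel_measurable M"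
  shows "(\<lambda>x. fst (f x)) \<in> borel_measurable M" "(\<lambda>x. snd (f x)) \<in> borel_measurable M"
  using assms by (simp_all add: borel_prod[symmetric] measurable_fst'' measurable_snd'')

lemma Mmat_meas[measurable (raw)]:
  assumes "x \<in> borel_measurable M" "A \<in> borel_measurable M"
  shows "(\<lambda>w. Mmat psi k (x w) (A w)) \<in> borel_measurable M"
  by (rule mat_meas) (simp add: Mmat_nth, use assms in measurable)




lemma Bm_mask:
  "Bm (Mmat psi k x A) *v mask psi k y = Bm (Mmat psi k x A) *v y"
proof -
  have z: "Bm (Mmat psi k x A) $ a $ i = 0" if "psi i \<noteq> k" for a i
    using Bm_col0[OF Mmat_row0[of psi i k x A, OF that]] .
  show ?thesis unfolding vec_eq_iff matrix_vector_mult_def mask_def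
    by (auto intro!: sum.cong simp: z)
qed

lemma Bm_M:
  assumes "invertible (transpose M ** M)"
  shows "Bm M ** M = mat 1"
  using inv_props(2)[OF assms] by (simp add: Bm_def matrix_mul_assoc)

lemma est0_eq:
  assumes "invertible (Hmat psi k x A)"
  shows "Bm (Mmat psi k x A) *v mask psi k (Mmat psi k x A *v b + e) - b = Bm (Mmat psi k x A) *v e"
proof -
  have "Bm (Mmat psi k x A) ** Mmat psi k x A = mat 1"
    using assms by (intro Bm_M) (simp add: Hmat_def)
  then show ?thesis
    by (simp add: Bm_mask matrix_vector_right_distrib matrix_vector_mul_assoc)
qed

lemma quad_restrict:
  fixes C :: "real^'n^'n"
  assumes "\<And>i j. psi i \<noteq> k \<Longrightarrow> C $ i $ j = 0" "\<And>i j. psi j \<noteq> k \<Longrightarrow> C $ i $ j = 0"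
  shows "(\<Sum>i\<in>UNIV. \<Sum>j\<in>UNIV. e $ i * e $ j * C $ i $ j) =
         (\<Sum>i\<in>{i. psi i = k}. \<Sum>j\<in>{j. psi j = k}. e $ i * e $ j * C $ i $ j)"
proof -
  have "(\<Sum>i\<in>UNIV. \<Sum>j\<in>UNIV. e $ i * e $ j * C $ i $ j) = (\<Sum>i\<in>{i. psi i = k}. \<Sum>j\<in>UNIV. e $ i * e $ j * C $ i $ j)"
    by (rule sum.mono_neutral_right) (auto intro!: sum.neutral simp: assms)
  also have "\<dots> = (\<Sum>i\<in>{i. psi i = k}. \<Sum>j\<in>{j. psi j = k}. e $ i * e $ j * C $ i $ j)"
    by (intro sum.cong refl sum.mono_neutral_right) (auto simp: assms)
  finally show ?thesis .
qed

lemma integrable_prod2: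
  fixes N :: "(real^'n) measure"
  assumes "sets N = sets borel" "integrable N (\<lambda>e. (e $ i)\<^sup>2)" "integrable N (\<lambda>e. (e $ j)\<^sup>2)"
  shows "integrable N (\<lambda>e. e $ i * e $ j)"
proof (rule Bochner_Integration.integrable_bound[OF Bochner_Integration.integrable_add[OF assms(2,3)]])
  show "(\<lambda>e. e $ i * e $ j) \<in> borel_measurable N"
    using assms(1) by (simp add: measurable_cong_sets[OF assms(1) refl])
  show "AE e in N. norm (e $ i * e $ j) \<le> norm ((e $ i)\<^sup>2 + (e $ j)\<^sup>2)"
  proof (rule AE_I2)
    fix e :: "real^'n"
    have h: "2 * (\<bar>e $ i\<bar> * \<bar>e $ j\<bar>) \<le> (e $ i)\<^sup>2 + (e $ j)\<^sup>2"
      using zero_le_power2[of "\<bar>e $ i\<bar> - \<bar>e $ j\<bar>"] unfolding power2_diff power2_abs by linarith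
    have "\<bar>e $ i * e $ j\<bar> \<le> (e $ i)\<^sup>2 + (e $ j)\<^sup>2"
      using h mult_nonneg_nonneg[OF abs_ge_zero[of "e $ i"] abs_ge_zero[of "e $ j"]] unfolding abs_mult by linarith
    then show "norm (e $ i * e $ j) \<le> norm ((e $ i)\<^sup>2 + (e $ j)\<^sup>2)" by simp
  qed
qed




lemma C_zero_psi:
  assumes "psi i \<noteq> k"
  shows "Cm S (Mmat psi k x A) $ i $ j = 0" "Cm S (Mmat psi k x A) $ j $ i = 0"
  using C_zero[OF Mmat_row0[of psi i k x A, OF assms]] by auto

lemma inner_bound:
  fixes N :: "(real^'n) measure" and psi :: "'n::finite \<Rightarrow> 'k::finite"
  assumes N: "prob_space N" "sets N = sets borel" and S: "pos_def S"
    and mom: "\<forall>i. psi i = k \<longrightarrow> integrable N (\<lambda>e. (e $ i)\<^sup>2) \<and> integral\<^sup>L N (\<lambda>e. e $ i) = 0 \<and>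
                 integral\<^sup>L N (\<lambda>e. (e $ i)\<^sup>2) \<le> \<sigma>\<^sup>2"
    and unc: "\<forall>i j. psi i = k \<longrightarrow> psi j = k \<longrightarrow> i \<noteq> j \<longrightarrow> integral\<^sup>L N (\<lambda>e. e $ i * e $ j) = 0"
  shows "(\<integral>\<^sup>+ e. ennreal (sqnorm_S S (Bm (Mmat psi k x A) *v e)) \<partial>N)
          \<le> ennreal (\<sigma>\<^sup>2 * trace (Cm S (Mmat psi k x A)))"
proof -
  define C where "C = Cm S (Mmat psi k x A)"
  define K where "K = {i. psi i = k}"
  define f where "f e = (\<Sum>i\<in>K. \<Sum>j\<in>K. e $ i * e $ j * C $ i $ j)" for e :: "real^'n"
  have feq: "sqnorm_S S (Bm (Mmat psi k x A) *v e) = f e" for e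
    unfolding sq_B quad_form f_def K_def C_def
    by (rule quad_restrict) (auto simp: C_zero_psi)
  have fnn: "f e \<ge> 0" for e
    using psd[OF S, of "Bm (Mmat psi k x A) *v e"] feq[of e] by (simp add: sqnorm_S_def)
  have intij: "integrable N (\<lambda>e. e $ i * e $ j)" if "i \<in> K" "j \<in> K" for i j
    using mom that by (intro integrable_prod2[OF N(2)]) (auto simp: K_def)
  have intf: "integrable N f"
    unfolding f_def by (intro Bochner_Integration.integrable_sum integrable_mult_left intij) auto
  have intf_eq: "integral\<^sup>L N f = (\<Sum>i\<in>K. \<Sum>j\<in>K. C $ i $ j * integral\<^sup>L N (\<lambda>e. e $ i * e $ j))"
    unfolding f_def
    by (simp add: Bochner_Integration.integral_sum integrable_mult_left intij mult.commute)
  have diag: "(\<Sum>j\<in>K. C $ i $ j * integral\<^sup>L N (\<lambda>e. e $ i * e $ j)) = C $ i $ i * integral\<^sup>L N (\<lambda>e. (e $ i)\<^sup>2)"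
    if "i \<in> K" for i
  proof -
    have "(\<Sum>j\<in>K. C $ i $ j * integral\<^sup>L N (\<lambda>e. e $ i * e $ j)) =
          (\<Sum>j\<in>K. if j = i then C $ i $ i * integral\<^sup>L N (\<lambda>e. (e $ i)\<^sup>2) else 0)"
      using unc that by (intro sum.cong) (auto simp: K_def power2_eq_square)
    also have "\<dots> = C $ i $ i * integral\<^sup>L N (\<lambda>e. (e $ i)\<^sup>2)" using that by (simp add: sum.delta')
    finally show ?thesis .
  qed
  have "integral\<^sup>L N f = (\<Sum>i\<in>K. C $ i $ i * integral\<^sup>L N (\<lambda>e. (e $ i)\<^sup>2))"
    using intf_eq diag by simp
  also have "\<dots> \<le> (\<Sum>i\<in>K. C $ i $ i * \<sigma>\<^sup>2)"
    using mom C_diag_nonneg[OF S] by (intro sum_mono mult_left_mono) (auto simp: K_def C_def)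
  also have "\<dots> \<le> (\<Sum>i\<in>UNIV. C $ i $ i * \<sigma>\<^sup>2)"
    by (intro sum_mono2) (auto simp: C_def intro!: mult_nonneg_nonneg C_diag_nonneg[OF S])
  also have "\<dots> = \<sigma>\<^sup>2 * trace C" by (simp add: trace_def sum_distrib_left mult.commute)
  finally have le: "integral\<^sup>L N f \<le> \<sigma>\<^sup>2 * trace C" .
  have "(\<integral>\<^sup>+ e. ennreal (sqnorm_S S (Bm (Mmat psi k x A) *v e)) \<partial>N) = (\<integral>\<^sup>+ e. ennreal (f e) \<partial>N)"
    by (simp add: feq)
  also have "\<dots> = ennreal (integral\<^sup>L N f)"
    by (rule nn_integral_eq_integral[OF intf]) (simp add: fnn)
  also have "\<dots> \<le> ennreal (\<sigma>\<^sup>2 * trace C)" using le by (rule ennreal_leI)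
  finally show ?thesis by (simp add: C_def)
qed




lemma trace_mult_expand: "trace ((S::real^'k^'k) ** X) = (\<Sum>a\<in>UNIV. \<Sum>b\<in>UNIV. S $ a $ b * X $ b $ a)"
  by (simp add: trace_def matrix_matrix_mult_def)

lemma trace_C_nonneg: "pos_def S \<Longrightarrow> trace (Cm S M) \<ge> 0"
  unfolding trace_def by (intro sum_nonneg C_diag_nonneg)

lemma Bm_Hmat: "Bm (Mmat psi k x A) = matrix_inv (Hmat psi k x A) ** transpose (Mmat psi k x A)"
  by (simp add: Bm_def Hmat_def)

locale setting =
  fixes P :: "((real^'n) \<times> (real^'n^'n)) measure"
    and psi :: "'n::finite \<Rightarrow> 'k::finite"
    and k :: 'k
    and \<Sigma> :: "real^'k^'k"
    and \<sigma>max :: real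
  assumes P_prob: "prob_space P"
    and P_borel: "sets P = sets borel"
    and H_inv: "AE w in P. invertible (Hmat psi k (fst w) (snd w))"
    and H_int: "\<And>i j. integrable P (\<lambda>w. matrix_inv (Hmat psi k (fst w) (snd w)) $ i $ j)"
    and Sig: "pos_def \<Sigma>"
begin

definition "Gw w = matrix_inv (Hmat psi k (fst w) (snd w))"

lemma G_meas: "Gw \<in> borel_measurable borel"
proof (rule mat_meas)
  fix i j
  have "(\<lambda>w. Gw w $ i $ j) \<in> borel_measurable P"
    using H_int[of i j] unfolding Gw_def by (rule borel_measurable_integrable)
  then show "(\<lambda>w. Gw w $ i $ j) \<in> borel_measurable borel"
    by (simp add: measurable_cong_sets[OF P_borel refl])
qed

lemma G_meas_raw[measurable (raw)]:
  "f \<in> borel_measurable M \<Longrightarrow> (\<lambda>x. Gw (f x)) \<in> borel_measurable M"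
  using measurable_compose[OF _ G_meas] by blast

lemma G_meas_P: "Gw \<in> borel_measurable P"
  using G_meas by (simp add: measurable_cong_sets[OF P_borel refl])

definition "est0 = (\<lambda>(x, A, y). Gw (x, A) ** transpose (Mmat psi k x A) *v y)"

lemma est0_meas: "est0 \<in> borel_measurable borel"
  unfolding est0_def split_beta' by measurable

lemma est0_alt: "est0 (x, A, y) = Bm (Mmat psi k x A) *v y"
  by (simp add: est0_def Bm_Hmat Gw_def)

lemma trace_expect:
  "(\<integral>\<^sup>+ w. ennreal (\<sigma>max\<^sup>2 * trace (\<Sigma> ** Gw w)) \<partial>P) =
   ennreal (\<sigma>max\<^sup>2 * trace (\<Sigma> ** mat_expect P Gw))"
proof -
  have int: "integrable P (\<lambda>w. \<sigma>max\<^sup>2 * trace (\<Sigma> ** Gw w))"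
    unfolding trace_mult_expand
    using H_int unfolding Gw_def
    by (intro integrable_mult_right Bochner_Integration.integrable_sum integrable_mult_right) auto
  have nn: "AE w in P. 0 \<le> \<sigma>max\<^sup>2 * trace (\<Sigma> ** Gw w)"
    using H_inv
  proof (rule AE_mp, intro AE_I2 impI)
    fix w assume inv: "invertible (Hmat psi k (fst w) (snd w))"
    have "trace (\<Sigma> ** Gw w) = trace (Cm \<Sigma> (Mmat psi k (fst w) (snd w)))"
      using trace_C[of "Mmat psi k (fst w) (snd w)" \<Sigma>] inv by (simp add: Gw_def Hmat_def)
    then show "0 \<le> \<sigma>max\<^sup>2 * trace (\<Sigma> ** Gw w)"
      using trace_C_nonneg[OF Sig, of "Mmat psi k (fst w) (snd w)"] by simp
  qed
  have "(\<integral>\<^sup>+ w. ennreal (\<sigma>max\<^sup>2 * trace (\<Sigma> ** Gw w)) \<partial>P) = ennreal (\<integral> w. \<sigma>max\<^sup>2 * trace (\<Sigma> ** Gw w) \<partial>P)"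
    by (rule nn_integral_eq_integral[OF int nn])
  also have "(\<integral> w. \<sigma>max\<^sup>2 * trace (\<Sigma> ** Gw w) \<partial>P) = \<sigma>max\<^sup>2 * trace (\<Sigma> ** mat_expect P Gw)"
    unfolding trace_mult_expand mat_expect_def
    using H_int unfolding Gw_def
    by (simp add: Bochner_Integration.integral_sum integrable_mult_right)
  finally show ?thesis .
qed

lemma upper:
  assumes nok: "noise_ok P psi k \<sigma>max \<kappa>"
  shows "risk P psi k \<Sigma> est0 b \<kappa> \<le> ennreal (\<sigma>max\<^sup>2 * trace (\<Sigma> ** mat_expect P Gw))"
proof -
  have kmeas: "\<kappa> \<in> P \<rightarrow>\<^sub>M subprob_algebra borel" using nok by (simp add: noise_ok_def)
  have ksets: "sets (\<kappa> w) = sets borel" if "w \<in> space P" for w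
    using measurable_space[OF kmeas that] by (simp add: space_subprob_algebra)
  have ae: "AE w in P. invertible (Hmat psi k (fst w) (snd w)) \<and> prob_space (\<kappa> w) \<and>
        (\<forall>i. psi i = k \<longrightarrow>
            integrable (\<kappa> w) (\<lambda>e. (e $ i)\<^sup>2) \<and>
            integral\<^sup>L (\<kappa> w) (\<lambda>e. e $ i) = 0 \<and>
            integral\<^sup>L (\<kappa> w) (\<lambda>e. (e $ i)\<^sup>2) \<le> \<sigma>max\<^sup>2) \<and>
        (\<forall>i j. psi i = k \<longrightarrow> psi j = k \<longrightarrow> i \<noteq> j \<longrightarrow>
            integral\<^sup>L (\<kappa> w) (\<lambda>e. e $ i * e $ j) = 0)"
    using H_inv nok unfolding noise_ok_def by (auto elim: AE_mp intro!: AE_I2)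
  have "risk P psi k \<Sigma> est0 b \<kappa> \<le> (\<integral>\<^sup>+ w. ennreal (\<sigma>max\<^sup>2 * trace (\<Sigma> ** Gw w)) \<partial>P)"
    unfolding risk_def
  proof (rule nn_integral_mono_AE)
    show "AE w in P. (\<integral>\<^sup>+ e. ennreal (sqnorm_S \<Sigma> (est0 (fst w, snd w, mask psi k (Mmat psi k (fst w) (snd w) *v b + e)) - b)) \<partial>\<kappa> w)
        \<le> ennreal (\<sigma>max\<^sup>2 * trace (\<Sigma> ** Gw w))"
      using ae AE_space
    proof (rule AE_mp[OF AE_conjI], intro AE_I2 impI)
      fix w assume h: "(invertible (Hmat psi k (fst w) (snd w)) \<and> prob_space (\<kappa> w) \<and>
        (\<forall>i. psi i = k \<longrightarrow>
            integrable (\<kappa> w) (\<lambda>e. (e $ i)\<^sup>2) \<and>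
            integral\<^sup>L (\<kappa> w) (\<lambda>e. e $ i) = 0 \<and>
            integral\<^sup>L (\<kappa> w) (\<lambda>e. (e $ i)\<^sup>2) \<le> \<sigma>max\<^sup>2) \<and>
        (\<forall>i j. psi i = k \<longrightarrow> psi j = k \<longrightarrow> i \<noteq> j \<longrightarrow>
            integral\<^sup>L (\<kappa> w) (\<lambda>e. e $ i * e $ j) = 0)) \<and> w \<in> space P"
      have "(\<integral>\<^sup>+ e. ennreal (sqnorm_S \<Sigma> (est0 (fst w, snd w, mask psi k (Mmat psi k (fst w) (snd w) *v b + e)) - b)) \<partial>\<kappa> w)
          = (\<integral>\<^sup>+ e. ennreal (sqnorm_S \<Sigma> (Bm (Mmat psi k (fst w) (snd w)) *v e)) \<partial>\<kappa> w)"
        using h by (simp add: est0_alt est0_eq)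
      also have "\<dots> \<le> ennreal (\<sigma>max\<^sup>2 * trace (Cm \<Sigma> (Mmat psi k (fst w) (snd w))))"
        using h ksets[of w] by (intro inner_bound Sig) auto
      also have "trace (Cm \<Sigma> (Mmat psi k (fst w) (snd w))) = trace (\<Sigma> ** Gw w)"
        using trace_C[of "Mmat psi k (fst w) (snd w)" \<Sigma>] h by (simp add: Gw_def Hmat_def)
      finally show "(\<integral>\<^sup>+ e. ennreal (sqnorm_S \<Sigma> (est0 (fst w, snd w, mask psi k (Mmat psi k (fst w) (snd w) *v b + e)) - b)) \<partial>\<kappa> w)
        \<le> ennreal (\<sigma>max\<^sup>2 * trace (\<Sigma> ** Gw w))" .
    qed
  qed
  then show ?thesis using trace_expect by simp
qed

end



lemma sqnorm_expand: "sqnorm_S S v = (\<Sum>i\<in>UNIV. \<Sum>j\<in>UNIV. v $ i * v $ j * S $ i $ j)"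
  unfolding sqnorm_S_def by (rule quad_form)

lemma sq_pair:
  assumes S: "pos_def S"
  shows "2 * sqnorm_S S \<xi> \<le> sqnorm_S S x + sqnorm_S S (x - 2 *\<^sub>R \<xi>)"
proof -
  have pt: "x$i*x$j*S$i$j + (x - 2 *\<^sub>R \<xi>)$i*(x - 2 *\<^sub>R \<xi>)$j*S$i$j
        = 2*(\<xi>$i*\<xi>$j*S$i$j) + 2*((x-\<xi>)$i*(x-\<xi>)$j*S$i$j)" for i j
    by (simp add: algebra_simps)
  have "sqnorm_S S x + sqnorm_S S (x - 2 *\<^sub>R \<xi>) = (\<Sum>i\<in>UNIV. \<Sum>j\<in>UNIV. x$i*x$j*S$i$j + (x - 2 *\<^sub>R \<xi>)$i*(x - 2 *\<^sub>R \<xi>)$j*S$i$j)"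
    by (simp only: sqnorm_expand sum.distrib)
  also have "\<dots> = (\<Sum>i\<in>UNIV. \<Sum>j\<in>UNIV. 2*(\<xi>$i*\<xi>$j*S$i$j) + 2*((x-\<xi>)$i*(x-\<xi>)$j*S$i$j))"
    by (simp only: pt)
  also have "\<dots> = 2 * sqnorm_S S \<xi> + 2 * sqnorm_S S (x - \<xi>)"
    by (simp only: sqnorm_expand sum.distrib sum_distrib_left)
  moreover have "sqnorm_S S (x - \<xi>) \<ge> 0" using psd[OF S] by (simp add: sqnorm_S_def)
  ultimately show ?thesis by simp
qed

definition cube :: "real \<Rightarrow> (real^'k) set" where
  "cube r = cbox (\<chi> j. - r) (\<chi> j. r)"

lemma cube_borel[measurable]: "cube r \<in> sets borel"
  unfolding cube_def by simp

lemma cube_emeasure: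
  assumes "r \<ge> 0"
  shows "emeasure lborel (cube r :: (real^'k) set) = ennreal ((2*r)^CARD('k))"
proof -
  have B: "\<And>b::real^'k. b \<in> Basis \<Longrightarrow> ((\<chi> j. r) - (\<chi> j. - r)) \<bullet> b = 2 * r"
    "\<And>b::real^'k. b \<in> Basis \<Longrightarrow> (\<chi> j. - r) \<bullet> b \<le> (\<chi> j. r) \<bullet> b"
    using assms by (auto simp: Basis_vec_def inner_axis)
  have "emeasure lborel (cube r :: (real^'k) set) = ennreal (2^CARD('k) * r^CARD('k))"
    unfolding cube_def emeasure_lborel_cbox_eq using B by (simp only: if_True prod.cong[OF refl B(1)] ball_simps) simp
  then show ?thesis by (simp add: power_mult_distrib)
qed

lemma cube_sub:
  fixes d :: "real^'k"
  assumes "(\<Sum>j\<in>UNIV. \<bar>d $ j\<bar>) \<le> D" "D \<le> T"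
  shows "cube (T - D) \<subseteq> {c. c \<in> cube T \<and> d + c \<in> cube T}"
proof
  fix c :: "real^'k" assume c: "c \<in> cube (T - D)"
  have dj: "\<bar>d $ j\<bar> \<le> D" for j
    using member_le_sum[of j UNIV "\<lambda>j. \<bar>d $ j\<bar>"] assms(1) by auto
  have D0: "D \<ge> 0" using dj[of undefined] by linarith
  from c have cc: "\<forall>i. -(T - D) \<le> c$i \<and> c$i \<le> T - D" by (simp add: cube_def mem_box_cart)
  have "\<bar>c $ j\<bar> \<le> T - D" for j using spec[OF cc, of j] by (simp add: abs_le_iff)
  then show "c \<in> {c. c \<in> cube T \<and> d + c \<in> cube T}"
    using dj D0 by (auto simp: cube_def mem_box_cart abs_le_iff) (smt (verit) dj abs_le_iff)+
qed

lemma lower_S: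
  fixes d :: "real^'k"
  assumes "(\<Sum>j\<in>UNIV. \<bar>d $ j\<bar>) \<le> D"
  shows "ennreal ((2 * max 0 (T - D))^CARD('k)) \<le> emeasure lborel {c. c \<in> cube T \<and> d + c \<in> cube T}"
proof (cases "D \<le> T")
  case True
  have meas: "{c. c \<in> cube T \<and> d + c \<in> cube T} \<in> sets lborel"
    by measurable
  have "ennreal ((2 * max 0 (T - D))^CARD('k)) = emeasure lborel (cube (T - D) :: (real^'k) set)"
    using True by (simp add: cube_emeasure)
  also have "\<dots> \<le> emeasure lborel {c. c \<in> cube T \<and> d + c \<in> cube T}"
    by (rule emeasure_mono[OF cube_sub[OF assms True] meas])
  finally show ?thesis .
next
  case False
  have "CARD('k) \<noteq> 0" by simp
  then show ?thesis using False by (simp add: power_0_left)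
qed

lemma core:
  fixes h :: "real^'k \<Rightarrow> real^'k"
  assumes hm[measurable]: "h \<in> borel_measurable borel" and S: "pos_def S" and Qb[measurable]: "Q \<in> sets borel"
  shows "ennreal (2 * sqnorm_S S \<xi>) * emeasure lborel {c. c \<in> Q \<and> 2 *\<^sub>R \<xi> + c \<in> Q}
   \<le> (\<integral>\<^sup>+ b. indicator Q b * ennreal (sqnorm_S S (h b - b)) \<partial>lborel)
     + (\<integral>\<^sup>+ b. indicator Q b * ennreal (sqnorm_S S (h (b - 2 *\<^sub>R \<xi>) - b)) \<partial>lborel)"
proof -
  define d where "d = 2 *\<^sub>R \<xi>"
  have tr: "(\<integral>\<^sup>+ b. indicator Q b * ennreal (sqnorm_S S (h (b - d) - b)) \<partial>lborel)
      = (\<integral>\<^sup>+ c. indicator Q (d + c) * ennreal (sqnorm_S S (h c - (d + c))) \<partial>lborel)"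
  proof -
    have "(\<integral>\<^sup>+ b. indicator Q b * ennreal (sqnorm_S S (h (b - d) - b)) \<partial>lborel)
       = (\<integral>\<^sup>+ b. indicator Q b * ennreal (sqnorm_S S (h (b - d) - b)) \<partial>distr lborel borel ((+) d))"
      by (simp add: lborel_distr_plus)
    also have "\<dots> = (\<integral>\<^sup>+ c. indicator Q (d + c) * ennreal (sqnorm_S S (h (d + c - d) - (d + c))) \<partial>lborel)"
      by (rule nn_integral_distr) (simp_all add: measurable_cong_sets[OF sets_distr refl])
    finally show ?thesis by simp
  qed
  have "(\<integral>\<^sup>+ c. ennreal (2 * sqnorm_S S \<xi>) * indicator {c. c \<in> Q \<and> d + c \<in> Q} c \<partial>lborel)
     \<le> (\<integral>\<^sup>+ c. indicator Q c * ennreal (sqnorm_S S (h c - c)) + indicator Q (d + c) * ennreal (sqnorm_S S (h c - (d + c))) \<partial>lborel)"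
  proof (rule nn_integral_mono)
    fix c
    show "ennreal (2 * sqnorm_S S \<xi>) * indicator {c. c \<in> Q \<and> d + c \<in> Q} c
      \<le> indicator Q c * ennreal (sqnorm_S S (h c - c)) + indicator Q (d + c) * ennreal (sqnorm_S S (h c - (d + c)))"
    proof (cases "c \<in> Q \<and> d + c \<in> Q")
      case True
      have e: "h c - (d + c) = (h c - c) - 2 *\<^sub>R \<xi>" by (simp add: d_def algebra_simps)
      have n1: "sqnorm_S S (h c - c) \<ge> 0" "sqnorm_S S (h c - (d + c)) \<ge> 0"
        using psd[OF S] by (simp_all add: sqnorm_S_def)
      have "2 * sqnorm_S S \<xi> \<le> sqnorm_S S (h c - c) + sqnorm_S S (h c - (d + c))"
        unfolding e by (rule sq_pair[OF S])
      then have "ennreal (2 * sqnorm_S S \<xi>) \<le> ennreal (sqnorm_S S (h c - c)) + ennreal (sqnorm_S S (h c - (d + c)))"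
        using n1 by (simp add: ennreal_plus[symmetric] ennreal_leI del: ennreal_plus)
      then show ?thesis using True by simp
    qed simp
  qed
  also have "\<dots> = (\<integral>\<^sup>+ c. indicator Q c * ennreal (sqnorm_S S (h c - c)) \<partial>lborel)
      + (\<integral>\<^sup>+ c. indicator Q (d + c) * ennreal (sqnorm_S S (h c - (d + c))) \<partial>lborel)"
    by (rule nn_integral_add) measurable
  finally show ?thesis
    using tr unfolding d_def
    by (subst (asm) nn_integral_cmult_indicator) (simp_all, measurable)
qed




lemma mm_sub_l: "(A::real^'m^'n) ** (B - C) = A ** B - A ** C"
  by (simp add: vec_eq_iff matrix_matrix_mult_def algebra_simps sum_subtractf)
lemma mm_sub_r: "((A::real^'m^'n) - B) ** C = A ** C - B ** C"
  by (simp add: vec_eq_iff matrix_matrix_mult_def algebra_simps sum_subtractf)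
lemma mm_add_r: "((A::real^'m^'n) + B) ** C = A ** C + B ** C"
  by (simp add: vec_eq_iff matrix_matrix_mult_def algebra_simps sum.distrib)
lemma tr_sub: "transpose ((A::real^'m^'n) - B) = transpose A - transpose B"
  by (simp add: vec_eq_iff transpose_def)
lemma tr_add: "transpose ((A::real^'m^'n) + B) = transpose A + transpose B"
  by (simp add: vec_eq_iff transpose_def)

lemma refl_algebra:
  fixes M :: "real^'k^'n"
  assumes inv: "invertible (transpose M ** M)"
  defines "Q \<equiv> M ** matrix_inv (transpose M ** M) ** transpose M"
  shows "transpose (mat 1 - (Q + Q)) = mat 1 - (Q + Q)"
    "(mat 1 - (Q + Q)) ** transpose (mat 1 - (Q + Q)) = mat 1"
proof -
  let ?H = "transpose M ** M" let ?G = "matrix_inv ?H"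
  have Gs: "transpose ?G = ?G" using inv_sym[OF inv] by (simp add: matrix_transpose_mul)
  have Qt: "transpose Q = Q" by (simp add: Q_def matrix_transpose_mul Gs matrix_mul_assoc)
  have "Q ** Q = M ** (?G ** ?H) ** ?G ** transpose M" by (simp add: Q_def matrix_mul_assoc)
  then have QQ: "Q ** Q = Q" using inv_props(2)[OF inv] by (simp add: Q_def)
  show t: "transpose (mat 1 - (Q + Q)) = mat 1 - (Q + Q)" by (simp only: tr_sub tr_add Qt transpose_mat)
  show "(mat 1 - (Q + Q)) ** transpose (mat 1 - (Q + Q)) = mat 1"
    unfolding t by (simp only: mm_sub_l mm_sub_r mm_add_r matrix_add_ldistrib QQ matrix_mul_lid matrix_mul_rid)
      (simp add: algebra_simps)
qed

lemma mv_axis: "((A::real^'m^'n) *v (s *\<^sub>R axis J 1)) $ i = s * A $ i $ J"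
proof -
  have "(A *v (s *\<^sub>R axis J 1)) $ i = (\<Sum>l\<in>UNIV. if l = J then A $ i $ l * s else 0)"
    by (simp add: matrix_vector_mult_def axis_def if_distrib cong: if_cong)
  then show ?thesis by (simp add: sum.delta)
qed

lemma sum_triple: "(\<Sum>u\<in>UNIV. F u) = (\<Sum>J\<in>UNIV. \<Sum>g\<in>UNIV. \<Sum>t\<in>UNIV. F (J, g, t))"
  by (simp add: UNIV_Times_UNIV[symmetric] sum.cartesian_product del: UNIV_Times_UNIV)

context setting
begin

definition "c0 = \<sigma>max * sqrt (real CARD('n))"
definition "sg g = (if g then c0 else - c0)"
definition "vb = (\<lambda>(J::'n, g::bool). sg g *\<^sub>R axis J (1::real))"
definition "Mw w = Mmat psi k (fst w) (snd w)"
definition "Qw w = Mw w ** Gw w ** transpose (Mw w)"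
definition "Rw w = mat 1 - (Qw w + Qw w)"
definition "epsw w = (\<lambda>(J, g, t). if t then Rw w *v vb (J, g) else vb (J, g))"
definition "Upmf = pmf_of_set (UNIV :: ('n \<times> bool \<times> bool) set)"
definition "kap w = distr (measure_pmf Upmf) borel (epsw w)"

lemma eps_nth: "epsw w (J, g, t) $ i =
   sg g * (if t then Rw w $ i $ J else (if J = i then 1 else 0))"
  by (cases t) (simp_all add: epsw_def vb_def mv_axis, simp add: axis_def)

lemma sgn_sum: "(\<Sum>g\<in>UNIV. sg g * (X::real)) = 0"
  by (simp add: UNIV_bool sg_def)

lemma sgn_sq_sum: "(\<Sum>g\<in>UNIV. sg g * a * (sg g * b)) = 2 * c0\<^sup>2 * (a * b)"
  by (simp add: UNIV_bool sg_def power2_eq_square algebra_simps)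

lemma m1: "(\<Sum>u\<in>UNIV. epsw w u $ i) = 0"
  unfolding sum_triple eps_nth
  by (simp only: sum_distrib_left[symmetric] sgn_sum sum.neutral_const)

lemma m2: "(\<Sum>u\<in>UNIV. epsw w u $ i * epsw w u $ j) =
   2 * c0\<^sup>2 * ((if i = j then 1 else 0) + (Rw w ** transpose (Rw w)) $ i $ j)"
proof -
  have "(\<Sum>u\<in>UNIV. epsw w u $ i * epsw w u $ j) =
     (\<Sum>J\<in>UNIV. \<Sum>t\<in>UNIV. 2 * c0\<^sup>2 * ((if t then Rw w $ i $ J else (if J = i then 1 else 0)) *
            (if t then Rw w $ j $ J else (if J = j then 1 else 0))))"
    unfolding sum_triple eps_nth
    by (subst sum.swap[of _ "UNIV::bool set" "UNIV::bool set"]) (simp only: sgn_sq_sum)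
  also have "\<dots> = (\<Sum>J\<in>UNIV. 2 * c0\<^sup>2 * ((if J = i then 1 else 0) * (if J = j then 1 else 0)) + 2 * c0\<^sup>2 * (Rw w $ i $ J * Rw w $ j $ J))"
    by (simp add: UNIV_bool)
  also have "\<dots> = 2 * c0\<^sup>2 * ((\<Sum>J\<in>UNIV. (if J = i then 1 else 0) * (if J = j then 1 else 0)) + (\<Sum>J\<in>UNIV. Rw w $ i $ J * Rw w $ j $ J))"
    by (simp add: sum.distrib sum_distrib_left algebra_simps)
  also have "(\<Sum>J\<in>UNIV. (if J = i then 1 else 0) * (if J = j then 1 else (0::real))) = (if i = j then 1 else 0)"
    by (simp add: if_distrib[of "\<lambda>x. x * _"] sum.delta' cong: if_cong)
  also have "(\<Sum>J\<in>UNIV. Rw w $ i $ J * Rw w $ j $ J) = (Rw w ** transpose (Rw w)) $ i $ j"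
    by (simp add: matrix_matrix_mult_def transpose_def)
  finally show ?thesis .
qed

lemma card_U: "card (UNIV :: ('n \<times> bool \<times> bool) set) = 4 * CARD('n)"
  by (simp add: card_UNIV_bool)

lemma c0_sq: "c0\<^sup>2 = \<sigma>max\<^sup>2 * real CARD('n)"
  by (simp add: c0_def power_mult_distrib)

lemma Rw_orth:
  assumes "invertible (Hmat psi k (fst w) (snd w))"
  shows "Rw w ** transpose (Rw w) = mat 1"
  using refl_algebra(2)[of "Mw w"] assms
  by (simp add: Rw_def Qw_def Gw_def Mw_def Hmat_def)

lemma eps_meas: "(\<lambda>w. epsw w u) \<in> borel_measurable borel"
proof -
  obtain J g t where u: "u = (J, g, t)" by (cases u) auto
  note G_meas[measurable]
  show ?thesis unfolding u epsw_def Rw_def Qw_def Mw_def by simp measurable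
qed

lemma eps_meas_P: "(\<lambda>w. epsw w u) \<in> borel_measurable P"
  using eps_meas by (simp add: measurable_cong_sets[OF P_borel refl])

lemma U_nonempty: "(UNIV :: ('n \<times> bool \<times> bool) set) \<noteq> {}" by simp

lemma int_U: "integral\<^sup>L (measure_pmf Upmf) f = (\<Sum>u\<in>UNIV. f u) / real (4 * CARD('n))"
  unfolding Upmf_def by (subst integral_pmf_of_set) (simp_all add: card_U)

lemma nn_U: "(\<integral>\<^sup>+ u. f u \<partial>measure_pmf Upmf) = (\<Sum>u\<in>UNIV. f u) / of_nat (4 * CARD('n))"
  unfolding Upmf_def by (subst nn_integral_pmf_of_set) (simp_all add: card_U mult.commute)

lemma kap_meas: "kap \<in> P \<rightarrow>\<^sub>M subprob_algebra borel"
  unfolding kap_def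
proof (rule measurable_distr2[where M="measure_pmf Upmf"])
  have "(\<lambda>p. epsw (fst p) (snd p)) \<in> measurable (P \<Otimes>\<^sub>M measure_pmf Upmf) borel"
  proof (rule measurable_compose_countable'[where I=UNIV and f="\<lambda>u p. epsw (fst p) u" and g=snd])
    fix u show "(\<lambda>p. epsw (fst p) u) \<in> measurable (P \<Otimes>\<^sub>M measure_pmf Upmf) borel"
      by (rule measurable_compose[OF measurable_fst eps_meas_P])
    show "snd \<in> measurable (P \<Otimes>\<^sub>M measure_pmf Upmf) (count_space UNIV)"
      by (rule measurable_compose[OF measurable_snd]) simp
  qed simp
  then show "(\<lambda>(w, u). epsw w u) \<in> measurable (P \<Otimes>\<^sub>M measure_pmf Upmf) borel"
    by (simp add: case_prod_beta')
  show "(\<lambda>x. measure_pmf Upmf) \<in> measurable P (subprob_algebra (measure_pmf Upmf))"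
    by (rule measurable_const) (simp add: space_subprob_algebra prob_space_imp_subprob_space prob_space_measure_pmf)
qed

lemma kap_ok: "noise_ok P psi k \<sigma>max kap"
  unfolding noise_ok_def
proof (intro conjI kap_meas)
  show "AE w in P. prob_space (kap w) \<and>
        (\<forall>i. psi i = k \<longrightarrow>
            integrable (kap w) (\<lambda>e. (e $ i)\<^sup>2) \<and>
            integral\<^sup>L (kap w) (\<lambda>e. e $ i) = 0 \<and>
            integral\<^sup>L (kap w) (\<lambda>e. (e $ i)\<^sup>2) \<le> \<sigma>max\<^sup>2) \<and>
        (\<forall>i j. psi i = k \<longrightarrow> psi j = k \<longrightarrow> i \<noteq> j \<longrightarrow>
            integral\<^sup>L (kap w) (\<lambda>e. e $ i * e $ j) = 0)"
    using H_inv
  proof (rule AE_mp, intro AE_I2 impI)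
    fix w assume inv: "invertible (Hmat psi k (fst w) (snd w))"
    have em: "epsw w \<in> measurable (measure_pmf Upmf) borel" by simp
    have ig: "integral\<^sup>L (kap w) f = (\<Sum>u\<in>UNIV. f (epsw w u)) / real (4 * CARD('n))"
      if "f \<in> borel_measurable borel" for f :: "real^'n \<Rightarrow> real"
      unfolding kap_def by (subst integral_distr[OF em that]) (rule int_U)
    have orth: "(Rw w ** transpose (Rw w)) $ i $ j = (if i = j then 1 else 0)" for i j
      using Rw_orth[OF inv] by (simp add: mat_def)
    have n0: "real CARD('n) \<noteq> 0" by simp
    show "prob_space (kap w) \<and>
        (\<forall>i. psi i = k \<longrightarrow>
            integrable (kap w) (\<lambda>e. (e $ i)\<^sup>2) \<and>
            integral\<^sup>L (kap w) (\<lambda>e. e $ i) = 0 \<and>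
            integral\<^sup>L (kap w) (\<lambda>e. (e $ i)\<^sup>2) \<le> \<sigma>max\<^sup>2) \<and>
        (\<forall>i j. psi i = k \<longrightarrow> psi j = k \<longrightarrow> i \<noteq> j \<longrightarrow>
            integral\<^sup>L (kap w) (\<lambda>e. e $ i * e $ j) = 0)"
    proof (intro conjI allI impI)
      show "prob_space (kap w)"
        unfolding kap_def by (rule prob_space.prob_space_distr[OF prob_space_measure_pmf em])
      fix i assume "psi i = k"
      show "integrable (kap w) (\<lambda>e. (e $ i)\<^sup>2)"
        unfolding kap_def
        by (subst integrable_distr_eq[OF em]) (simp_all add: integrable_measure_pmf_finite Upmf_def)
      show "integral\<^sup>L (kap w) (\<lambda>e. e $ i) = 0"
        by (subst ig) (simp_all add: m1)
      have "integral\<^sup>L (kap w) (\<lambda>e. (e $ i)\<^sup>2) = (2 * c0\<^sup>2 * (1 + 1)) / real (4 * CARD('n))"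
        by (subst ig) (simp_all add: power2_eq_square m2 orth)
      also have "\<dots> = \<sigma>max\<^sup>2" using n0 by (simp add: c0_sq)
      finally show "integral\<^sup>L (kap w) (\<lambda>e. (e $ i)\<^sup>2) \<le> \<sigma>max\<^sup>2" by simp
    next
      fix i j assume "psi i = k" "psi j = k" "i \<noteq> j"
      then show "integral\<^sup>L (kap w) (\<lambda>e. e $ i * e $ j) = 0"
        by (subst ig) (simp_all add: m2 orth)
    qed
  qed
qed

end



lemma axis_quad: "axis i 1 \<bullet> ((C::real^'n^'n) *v axis i 1) = C $ i $ i"
  unfolding quad_form by (simp only: axis_def vec_lambda_beta delta2)

lemma sq_axis: "sqnorm_S S (Bm M *v (s *\<^sub>R axis J 1)) = s\<^sup>2 * Cm S M $ J $ J"
proof -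
  have "sqnorm_S S (Bm M *v (s *\<^sub>R axis J 1)) = (s *\<^sub>R axis J 1) \<bullet> (Cm S M *v (s *\<^sub>R axis J 1))"
    by (rule sq_B)
  also have "\<dots> = s\<^sup>2 * (axis J 1 \<bullet> (Cm S M *v axis J 1))"
    by (simp add: matrix_vector_mult_scaleR power2_eq_square)
  finally show ?thesis by (simp add: axis_quad)
qed

context setting
begin

definition "Fw est w b u = ennreal (sqnorm_S \<Sigma> (est (fst w, snd w, mask psi k (Mw w *v b + epsw w u)) - b))"
definition "Dw w = (\<Sum>J\<in>UNIV. \<Sum>j\<in>UNIV. 2 * \<bar>c0\<bar> * \<bar>Bm (Mw w) $ j $ J\<bar>)"

lemma Bm_Mw: "Bm (Mw w) = Gw w ** transpose (Mw w)"
  by (simp add: Mw_def Gw_def Bm_Hmat)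

lemma Rw_shift: "Mw w *v b + Rw w *v v = Mw w *v (b - 2 *\<^sub>R (Bm (Mw w) *v v)) + v"
proof -
  have "Qw w *v v = Mw w *v (Bm (Mw w) *v v)"
    by (simp add: Qw_def Bm_Mw matrix_vector_mul_assoc matrix_mul_assoc)
  moreover have "Rw w *v v = v - (Qw w *v v + Qw w *v v)"
    by (simp only: Rw_def matrix_vector_mult_diff_rdistrib matrix_vector_mult_add_rdistrib matrix_vector_mul_lid)
  ultimately show ?thesis
    by (simp only: matrix_vector_mult_diff_distrib matrix_vector_mult_scaleR scaleR_2 matrix_vector_right_distrib)
      (simp add: algebra_simps)
qed

lemma perw:
  assumes est[measurable]: "est \<in> borel_measurable borel"
  shows "ennreal ((2 * max 0 (T - Dw w))^CARD('k)) * ennreal (4 * c0\<^sup>2 * trace (Cm \<Sigma> (Mw w)))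
     \<le> (\<integral>\<^sup>+ b. indicator (cube T) b * (\<Sum>u\<in>UNIV. Fw est w b u) \<partial>lborel)"
proof -
  let ?V = "(2 * max 0 (T - Dw w))^CARD('k)"
  let ?C = "Cm \<Sigma> (Mw w)"
  let ?I = "\<lambda>u. \<integral>\<^sup>+ b. indicator (cube T) b * Fw est w b u \<partial>lborel"
  have Fm: "(\<lambda>b. indicator (cube T) b * Fw est w b u) \<in> borel_measurable lborel" for u
    unfolding Fw_def by measurable
  have "(\<integral>\<^sup>+ b. indicator (cube T) b * (\<Sum>u\<in>UNIV. Fw est w b u) \<partial>lborel) = (\<Sum>u\<in>UNIV. ?I u)"
    by (simp only: sum_distrib_left nn_integral_sum[OF Fm])
  also have "\<dots> = (\<Sum>J\<in>UNIV. \<Sum>g\<in>UNIV. ?I (J, g, False) + ?I (J, g, True))"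
    unfolding sum_triple by (simp add: UNIV_bool add.commute)
  finally have eq: "(\<integral>\<^sup>+ b. indicator (cube T) b * (\<Sum>u\<in>UNIV. Fw est w b u) \<partial>lborel)
      = (\<Sum>J\<in>UNIV. \<Sum>g\<in>UNIV. ?I (J, g, False) + ?I (J, g, True))" .
  have pair: "ennreal (2 * c0\<^sup>2 * ?C $ J $ J) * ennreal ?V \<le> ?I (J, g, False) + ?I (J, g, True)" for J g
  proof -
    define v where "v = vb (J, g)"
    define \<xi> where "\<xi> = Bm (Mw w) *v v"
    define h where "h b = est (fst w, snd w, mask psi k (Mw w *v b + v))" for b
    have hm: "h \<in> borel_measurable borel" unfolding h_def by measurable
    have IF: "?I (J, g, False) = (\<integral>\<^sup>+ b. indicator (cube T) b * ennreal (sqnorm_S \<Sigma> (h b - b)) \<partial>lborel)"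
      by (simp add: Fw_def h_def epsw_def v_def)
    have IT: "?I (J, g, True) = (\<integral>\<^sup>+ b. indicator (cube T) b * ennreal (sqnorm_S \<Sigma> (h (b - 2 *\<^sub>R \<xi>) - b)) \<partial>lborel)"
      by (simp add: Fw_def h_def epsw_def v_def \<xi>_def Rw_shift)
    have sqxi: "sqnorm_S \<Sigma> \<xi> = c0\<^sup>2 * ?C $ J $ J"
      unfolding \<xi>_def v_def vb_def by (simp add: sq_axis sg_def power2_eq_square)
    have dsum: "(\<Sum>j\<in>UNIV. \<bar>(2 *\<^sub>R \<xi>) $ j\<bar>) \<le> Dw w"
    proof -
      have "(\<Sum>j\<in>UNIV. \<bar>(2 *\<^sub>R \<xi>) $ j\<bar>) = (\<Sum>j\<in>UNIV. 2 * \<bar>c0\<bar> * \<bar>Bm (Mw w) $ j $ J\<bar>)"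
        unfolding \<xi>_def v_def vb_def by (simp add: mv_axis sg_def abs_mult mult.assoc)
      also have "\<dots> \<le> Dw w" unfolding Dw_def
        by (rule member_le_sum[where f="\<lambda>J. \<Sum>j\<in>UNIV. 2 * \<bar>c0\<bar> * \<bar>Bm (Mw w) $ j $ J\<bar>"])
          (auto intro!: sum_nonneg)
      finally show ?thesis .
    qed
    have "ennreal (2 * c0\<^sup>2 * ?C $ J $ J) * ennreal ?V
       \<le> ennreal (2 * sqnorm_S \<Sigma> \<xi>) * emeasure lborel {c. c \<in> cube T \<and> 2 *\<^sub>R \<xi> + c \<in> cube T}"
      using lower_S[OF dsum, of T] by (simp add: sqxi mult.assoc mult_left_mono)
    also have "\<dots> \<le> ?I (J, g, False) + ?I (J, g, True)"
      unfolding IF IT by (rule core[OF hm Sig cube_borel])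
    finally show ?thesis .
  qed
  have Cnn: "0 \<le> ?C $ J $ J" for J by (rule C_diag_nonneg[OF Sig])
  have nnV: "0 \<le> ?V" by simp
  have nnT: "0 \<le> 2 * c0\<^sup>2 * ?C $ J $ J * ?V" for J using Cnn[of J] nnV by simp
  have "ennreal ?V * ennreal (4 * c0\<^sup>2 * trace ?C) = ennreal (\<Sum>J\<in>UNIV. \<Sum>g\<in>(UNIV::bool set). 2 * c0\<^sup>2 * ?C $ J $ J * ?V)"
  proof -
    have "(\<Sum>J\<in>UNIV. \<Sum>g\<in>(UNIV::bool set). 2 * c0\<^sup>2 * ?C $ J $ J * ?V) = ?V * (4 * c0\<^sup>2 * trace ?C)"
      by (simp add: UNIV_bool trace_def sum_distrib_left sum_distrib_right algebra_simps)
    then show ?thesis using nnV Cnn by (simp add: ennreal_mult[symmetric] trace_def sum_nonneg)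
  qed
  also have "\<dots> = (\<Sum>J\<in>UNIV. ennreal (\<Sum>g\<in>(UNIV::bool set). 2 * c0\<^sup>2 * ?C $ J $ J * ?V))"
    by (rule sum_ennreal[symmetric]) (intro sum_nonneg nnT)
  also have "\<dots> = (\<Sum>J\<in>UNIV. \<Sum>g\<in>(UNIV::bool set). ennreal (2 * c0\<^sup>2 * ?C $ J $ J * ?V))"
    by (intro sum.cong refl sum_ennreal[symmetric] nnT)
  also have "\<dots> = (\<Sum>J\<in>UNIV. \<Sum>g\<in>(UNIV::bool set). ennreal (2 * c0\<^sup>2 * ?C $ J $ J) * ennreal ?V)"
    using nnV Cnn by (simp add: ennreal_mult)
  also have "\<dots> \<le> (\<Sum>J\<in>UNIV. \<Sum>g\<in>UNIV. ?I (J, g, False) + ?I (J, g, True))"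
    by (intro sum_mono pair)
  finally show ?thesis using eq by simp
qed

end



context setting
begin

lemma eps_meas_raw[measurable (raw)]:
  "f \<in> borel_measurable M \<Longrightarrow> (\<lambda>x. epsw (f x) u) \<in> borel_measurable M"
  using measurable_compose[OF _ eps_meas] by blast

lemma Mw_meas_raw[measurable (raw)]:
  "f \<in> borel_measurable M \<Longrightarrow> (\<lambda>x. Mw (f x)) \<in> borel_measurable M"
  using fst_borel_meas[of f M] unfolding Mw_def by (intro Mmat_meas) auto

lemma sets_pair_borel: "sets (lborel \<Otimes>\<^sub>M P) = sets (borel :: ((real^'k) \<times> (real^'n) \<times> (real^'n^'n)) measure)"
proof -
  have "sets (lborel \<Otimes>\<^sub>M P) = sets ((borel :: (real^'k) measure) \<Otimes>\<^sub>M (borel :: ((real^'n) \<times> (real^'n^'n)) measure))"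
    by (rule sets_pair_measure_cong) (simp_all add: P_borel)
  then show ?thesis unfolding borel_prod .
qed

lemma risk_kap:
  assumes est[measurable]: "est \<in> borel_measurable borel"
  shows "risk P psi k \<Sigma> est b kap = (\<integral>\<^sup>+ w. (\<Sum>u\<in>UNIV. Fw est w b u) / of_nat (4 * CARD('n)) \<partial>P)"
  unfolding risk_def
proof (rule nn_integral_cong)
  fix w
  have em: "epsw w \<in> measurable (measure_pmf Upmf) borel" by simp
  have fm: "(\<lambda>e. ennreal (sqnorm_S \<Sigma> (est (fst w, snd w, mask psi k (Mmat psi k (fst w) (snd w) *v b + e)) - b)))
       \<in> borel_measurable borel" by measurable
  show "(\<integral>\<^sup>+ e. ennreal (sqnorm_S \<Sigma> (est (fst w, snd w, mask psi k (Mmat psi k (fst w) (snd w) *v b + e)) - b)) \<partial>kap w)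
     = (\<Sum>u\<in>UNIV. Fw est w b u) / of_nat (4 * CARD('n))"
    unfolding kap_def
    by (subst nn_integral_distr[OF em]) (simp_all add: nn_U Fw_def Mw_def measurable_cong_sets[OF sets_distr refl] fm)
qed

lemma joint_meas:
  assumes est[measurable]: "est \<in> borel_measurable borel"
  shows "(\<lambda>(b, w). indicator (cube T) b * ((\<Sum>u\<in>UNIV. Fw est w b u) / of_nat (4 * CARD('n))))
     \<in> borel_measurable (lborel \<Otimes>\<^sub>M P)"
proof -
  have "(\<lambda>z. indicator (cube T) (fst z) * ((\<Sum>u\<in>UNIV. Fw est (snd z) (fst z) u) / of_nat (4 * CARD('n))))
     \<in> borel_measurable (borel :: ((real^'k) \<times> (real^'n) \<times> (real^'n^'n)) measure)"
    unfolding Fw_def by measurable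
  then show ?thesis
    by (simp add: measurable_cong_sets[OF sets_pair_borel refl] case_prod_beta')
qed

lemma w_meas:
  assumes est[measurable]: "est \<in> borel_measurable borel"
  shows "(\<lambda>w. (\<Sum>u\<in>UNIV. Fw est w b u) / of_nat (4 * CARD('n))) \<in> borel_measurable P"
proof -
  have "(\<lambda>w. (\<Sum>u\<in>UNIV. Fw est w b u) / of_nat (4 * CARD('n))) \<in> borel_measurable borel"
    unfolding Fw_def by measurable
  then show ?thesis by (simp add: measurable_cong_sets[OF P_borel refl])
qed

lemma tonelli:
  assumes est[measurable]: "est \<in> borel_measurable borel"
  shows "(\<integral>\<^sup>+ w. (\<integral>\<^sup>+ b. indicator (cube T) b * ((\<Sum>u\<in>UNIV. Fw est w b u) / of_nat (4 * CARD('n))) \<partial>lborel) \<partial>P)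
       = (\<integral>\<^sup>+ b. indicator (cube T) b * risk P psi k \<Sigma> est b kap \<partial>lborel)"
proof -
  interpret Pp: prob_space P by (rule P_prob)
  interpret pr: pair_sigma_finite lborel P ..
  have "(\<integral>\<^sup>+ w. (\<integral>\<^sup>+ b. indicator (cube T) b * ((\<Sum>u\<in>UNIV. Fw est w b u) / of_nat (4 * CARD('n))) \<partial>lborel) \<partial>P)
     = (\<integral>\<^sup>+ b. (\<integral>\<^sup>+ w. indicator (cube T) b * ((\<Sum>u\<in>UNIV. Fw est w b u) / of_nat (4 * CARD('n))) \<partial>P) \<partial>lborel)"
    by (rule pr.Fubini'[OF joint_meas[OF est]])
  also have "\<dots> = (\<integral>\<^sup>+ b. indicator (cube T) b * risk P psi k \<Sigma> est b kap \<partial>lborel)"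
    by (intro nn_integral_cong) (subst nn_integral_cmult[OF w_meas[OF est]], simp add: risk_kap[OF est])
  finally show ?thesis .
qed

end



context setting
begin

lemma Dw_nonneg: "Dw w \<ge> 0"
  unfolding Dw_def by (intro sum_nonneg) auto

lemma stepA:
  assumes est[measurable]: "est \<in> borel_measurable borel" and T: "T > 0"
  shows "(\<integral>\<^sup>+ w. ennreal ((2 * max 0 (T - Dw w))^CARD('k) * (\<sigma>max\<^sup>2 * trace (Cm \<Sigma> (Mw w)))) \<partial>P)
     \<le> (SUP (b, \<kappa>) \<in> {(b, \<kappa>). noise_ok P psi k \<sigma>max \<kappa>}. risk P psi k \<Sigma> est b \<kappa>) * ennreal ((2*T)^CARD('k))"
    (is "?L \<le> ?S * _")
proof -
  define N :: ennreal where "N = of_nat (4 * CARD('n))"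
  have Nr: "N = ennreal (real (4 * CARD('n)))" by (simp add: N_def ennreal_of_nat_eq_real_of_nat)
  have pw: "ennreal ((2 * max 0 (T - Dw w))^CARD('k) * (\<sigma>max\<^sup>2 * trace (Cm \<Sigma> (Mw w))))
      \<le> (\<integral>\<^sup>+ b. indicator (cube T) b * ((\<Sum>u\<in>UNIV. Fw est w b u) / N) \<partial>lborel)" for w
  proof -
    let ?V = "(2 * max 0 (T - Dw w))^CARD('k)"
    let ?t = "trace (Cm \<Sigma> (Mw w))"
    have tn: "?t \<ge> 0" by (rule trace_C_nonneg[OF Sig])
    have Vn: "?V \<ge> 0" by simp
    have n0: "real CARD('n) > 0" by simp
    have "ennreal (?V * (\<sigma>max\<^sup>2 * ?t)) = ennreal (?V * (4 * c0\<^sup>2 * ?t) / real (4 * CARD('n)))"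
      using n0 by (simp add: c0_sq field_simps)
    also have "\<dots> = ennreal (?V * (4 * c0\<^sup>2 * ?t)) / ennreal (real (4 * CARD('n)))"
      by (rule divide_ennreal[symmetric]) (use tn Vn n0 in simp_all)
    also have "\<dots> = ennreal ?V * ennreal (4 * c0\<^sup>2 * ?t) / N"
      using tn by (simp only: Nr ennreal_mult[OF Vn] mult_nonneg_nonneg zero_le_numeral zero_le_power2)
    also have "\<dots> \<le> (\<integral>\<^sup>+ b. indicator (cube T) b * (\<Sum>u\<in>UNIV. Fw est w b u) \<partial>lborel) / N"
      by (rule divide_right_mono_ennreal[OF perw[OF est]])
    also have "\<dots> = (\<integral>\<^sup>+ b. indicator (cube T) b * (\<Sum>u\<in>UNIV. Fw est w b u) / N \<partial>lborel)"
      by (rule nn_integral_divide[symmetric]) (unfold Fw_def, measurable)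
    finally show ?thesis by (simp add: ennreal_times_divide)
  qed
  have "?L \<le> (\<integral>\<^sup>+ w. (\<integral>\<^sup>+ b. indicator (cube T) b * ((\<Sum>u\<in>UNIV. Fw est w b u) / N) \<partial>lborel) \<partial>P)"
    by (intro nn_integral_mono pw)
  also have "\<dots> = (\<integral>\<^sup>+ b. indicator (cube T) b * risk P psi k \<Sigma> est b kap \<partial>lborel)"
    unfolding N_def by (rule tonelli[OF est])
  also have "\<dots> \<le> (\<integral>\<^sup>+ b. indicator (cube T) (b::real^'k) * ?S \<partial>lborel)"
  proof -
    have r: "risk P psi k \<Sigma> est b kap \<le> ?S" for b
      by (rule SUP_upper2[of "(b, kap)"]) (auto simp: kap_ok)
    show ?thesis
      apply (rule nn_integral_mono_AE)
      apply (rule AE_I2)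
      apply (rule mult_left_mono)
       apply (rule r)
      apply simp
      done
  qed
  also have "\<dots> = ?S * ennreal ((2*T)^CARD('k))"
    using T by (simp add: mult.commute[of "indicator _ _"] nn_integral_cmult_indicator cube_emeasure)
  finally show ?thesis .
qed

end



lemma ratio_mono:
  fixes D T1 T2 :: real
  assumes "0 < T1" "T1 \<le> T2" "0 \<le> D"
  shows "max 0 (T1 - D) / T1 \<le> max 0 (T2 - D) / T2"
proof (cases "T1 \<le> D")
  case True
  then show ?thesis using assms by simp
next
  case False
  have T2: "0 < T2" using assms by simp
  have e1: "max 0 (T1 - D) / T1 = 1 - D / T1" using False assms by (simp add: field_simps)
  have e2: "max 0 (T2 - D) / T2 = 1 - D / T2" using False assms T2 by (simp add: field_simps)
  have "D / T2 \<le> D / T1" using assms by (intro divide_left_mono) auto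
  then show ?thesis unfolding e1 e2 by simp
qed

lemma ratio_lim:
  fixes D :: real
  assumes D: "0 \<le> D"
  shows "(SUP m. ennreal ((max 0 (real (Suc m) - D) / real (Suc m))^K)) = 1"
proof -
  define f where "f m = (max 0 (real (Suc m) - D) / real (Suc m))^K" for m
  have inc: "incseq (\<lambda>m. ennreal (f m))"
  proof (rule incseq_SucI)
    fix m
    have "max 0 (real (Suc m) - D) / real (Suc m) \<le> max 0 (real (Suc (Suc m)) - D) / real (Suc (Suc m))"
      using D by (intro ratio_mono) auto
    then have "f m \<le> f (Suc m)" unfolding f_def by (intro power_mono) auto
    then show "ennreal (f m) \<le> ennreal (f (Suc m))" by (rule ennreal_leI)
  qed
  have ev: "eventually (\<lambda>m. (1 - D * inverse (real (Suc m)))^K = f m) sequentially"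
  proof (rule eventually_sequentiallyI[of "nat \<lceil>D\<rceil>"])
    fix m assume "nat \<lceil>D\<rceil> \<le> m"
    then have "D < real (Suc m)" by linarith
    then show "(1 - D * inverse (real (Suc m)))^K = f m"
      unfolding f_def by (simp add: field_simps)
  qed
  have "(\<lambda>m. (1 - D * inverse (real (Suc m)))^K) \<longlonglongrightarrow> (1 - D * 0)^K"
    by (intro tendsto_intros LIMSEQ_inverse_real_of_nat)
  then have "f \<longlonglongrightarrow> 1" using ev by (simp add: tendsto_cong)
  then have "(\<lambda>m. ennreal (f m)) \<longlonglongrightarrow> ennreal 1" by (rule tendsto_ennrealI)
  moreover have "(\<lambda>m. ennreal (f m)) \<longlonglongrightarrow> (SUP m. ennreal (f m))" by (rule LIMSEQ_SUP[OF inc])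
  ultimately show ?thesis unfolding f_def using LIMSEQ_unique by fastforce
qed

context setting
begin

definition "rT T w = (max 0 (T - Dw w) / T)^CARD('k)"
definition "Xw w = \<sigma>max\<^sup>2 * trace (Cm \<Sigma> (Mw w))"

lemma Xw_nonneg: "Xw w \<ge> 0"
  unfolding Xw_def by (intro mult_nonneg_nonneg zero_le_power2 trace_C_nonneg[OF Sig])

lemma rX_meas: "(\<lambda>w. ennreal (rT T w * Xw w)) \<in> borel_measurable P"
proof -
  note G_meas[measurable]
  have "(\<lambda>w. ennreal (rT T w * Xw w)) \<in> borel_measurable borel"
    unfolding rT_def Xw_def Dw_def Cm_def Bm_Mw by measurable
  then show ?thesis by (simp add: measurable_cong_sets[OF P_borel refl])
qed

lemma stepB:
  assumes est[measurable]: "est \<in> borel_measurable borel" and T: "T > 0"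
  shows "(\<integral>\<^sup>+ w. ennreal (rT T w * Xw w) \<partial>P)
     \<le> (SUP (b, \<kappa>) \<in> {(b, \<kappa>). noise_ok P psi k \<sigma>max \<kappa>}. risk P psi k \<Sigma> est b \<kappa>)"
    (is "?L \<le> ?S")
proof -
  let ?c = "ennreal ((2*T)^CARD('k))"
  have eq: "(2 * max 0 (T - Dw w))^CARD('k) * (\<sigma>max\<^sup>2 * trace (Cm \<Sigma> (Mw w))) = (2*T)^CARD('k) * (rT T w * Xw w)" for w
  proof -
    have "2 * max 0 (T - Dw w) = 2 * T * (max 0 (T - Dw w) / T)" using T by simp
    then have h: "(2 * max 0 (T - Dw w))^CARD('k) = (2*T)^CARD('k) * (max 0 (T - Dw w) / T)^CARD('k)"
      by (simp only: power_mult_distrib)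
    show ?thesis unfolding rT_def Xw_def h by (simp only: mult.assoc)
  qed
  have nn: "0 \<le> rT T w * Xw w" for w
    using Xw_nonneg[of w] T unfolding rT_def by simp
  have "?c * ?L = (\<integral>\<^sup>+ w. ?c * ennreal (rT T w * Xw w) \<partial>P)"
    by (rule nn_integral_cmult[OF rX_meas, symmetric])
  also have "\<dots> = (\<integral>\<^sup>+ w. ennreal ((2 * max 0 (T - Dw w))^CARD('k) * (\<sigma>max\<^sup>2 * trace (Cm \<Sigma> (Mw w)))) \<partial>P)"
  proof (rule nn_integral_cong)
    fix w
    have tp: "0 \<le> (2*T)^CARD('k)" using T by simp
    show "?c * ennreal (rT T w * Xw w) = ennreal ((2 * max 0 (T - Dw w))^CARD('k) * (\<sigma>max\<^sup>2 * trace (Cm \<Sigma> (Mw w))))"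
      by (simp only: eq ennreal_mult[OF tp nn])
  qed
  also have "\<dots> \<le> ?S * ?c" by (rule stepA[OF est T])
  also have "\<dots> = ?c * ?S" by (simp add: mult.commute)
  finally have "?c * ?L \<le> ?c * ?S" .
  moreover have "?c \<noteq> 0" "?c \<noteq> top" using T by simp_all
  ultimately show ?thesis using ennreal_mult_le_mult_iff by blast
qed

lemma stepC:
  assumes est[measurable]: "est \<in> borel_measurable borel"
  shows "(\<integral>\<^sup>+ w. ennreal (Xw w) \<partial>P)
     \<le> (SUP (b, \<kappa>) \<in> {(b, \<kappa>). noise_ok P psi k \<sigma>max \<kappa>}. risk P psi k \<Sigma> est b \<kappa>)"
    (is "_ \<le> ?S")
proof -
  define g where "g m w = ennreal (rT (real (Suc m)) w * Xw w)" for m w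
  have inc: "incseq g"
  proof (rule incseq_SucI, rule le_funI)
    fix m w
    have "max 0 (real (Suc m) - Dw w) / real (Suc m) \<le> max 0 (real (Suc (Suc m)) - Dw w) / real (Suc (Suc m))"
      using Dw_nonneg[of w] by (intro ratio_mono) auto
    then have "rT (real (Suc m)) w \<le> rT (real (Suc (Suc m))) w" unfolding rT_def by (intro power_mono) auto
    then show "g m w \<le> g (Suc m) w" unfolding g_def
      by (intro ennreal_leI mult_right_mono Xw_nonneg)
  qed
  have sup: "(SUP m. g m w) = ennreal (Xw w)" for w
  proof -
    have "(SUP m. g m w) = (SUP m. ennreal (rT (real (Suc m)) w) * ennreal (Xw w))"
      unfolding g_def using Xw_nonneg[of w] by (simp add: ennreal_mult'' rT_def)
    also have "\<dots> = (SUP m. ennreal (rT (real (Suc m)) w)) * ennreal (Xw w)"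
      by (simp add: SUP_mult_right_ennreal)
    also have "(SUP m. ennreal (rT (real (Suc m)) w)) = 1"
      unfolding rT_def by (rule ratio_lim[OF Dw_nonneg])
    finally show ?thesis by simp
  qed
  have "(\<integral>\<^sup>+ w. ennreal (Xw w) \<partial>P) = (\<integral>\<^sup>+ w. (SUP m. g m w) \<partial>P)" by (simp add: sup)
  also have "\<dots> = (SUP m. \<integral>\<^sup>+ w. g m w \<partial>P)"
    by (rule nn_integral_monotone_convergence_SUP[OF inc]) (unfold g_def, rule rX_meas)
  also have "\<dots> \<le> ?S"
    by (rule SUP_least) (unfold g_def, rule stepB[OF est], simp)
  finally show ?thesis .
qed

lemma lower:
  assumes est: "est \<in> borel_measurable borel"
  shows "ennreal (\<sigma>max\<^sup>2 * trace (\<Sigma> ** mat_expect P Gw))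
     \<le> (SUP (b, \<kappa>) \<in> {(b, \<kappa>). noise_ok P psi k \<sigma>max \<kappa>}. risk P psi k \<Sigma> est b \<kappa>)"
proof -
  have "ennreal (\<sigma>max\<^sup>2 * trace (\<Sigma> ** mat_expect P Gw)) = (\<integral>\<^sup>+ w. ennreal (\<sigma>max\<^sup>2 * trace (\<Sigma> ** Gw w)) \<partial>P)"
    by (rule trace_expect[symmetric])
  also have "\<dots> = (\<integral>\<^sup>+ w. ennreal (Xw w) \<partial>P)"
  proof (rule nn_integral_cong_AE)
    show "AE w in P. ennreal (\<sigma>max\<^sup>2 * trace (\<Sigma> ** Gw w)) = ennreal (Xw w)"
      using H_inv
    proof (rule AE_mp, intro AE_I2 impI)
      fix w assume inv: "invertible (Hmat psi k (fst w) (snd w))"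
      show "ennreal (\<sigma>max\<^sup>2 * trace (\<Sigma> ** Gw w)) = ennreal (Xw w)"
        using trace_C[of "Mw w" \<Sigma>] inv by (simp add: Xw_def Gw_def Mw_def Hmat_def)
    qed
  qed
  also have "\<dots> \<le> (SUP (b, \<kappa>) \<in> {(b, \<kappa>). noise_ok P psi k \<sigma>max \<kappa>}. risk P psi k \<Sigma> est b \<kappa>)"
    by (rule stepC[OF est])
  finally show ?thesis .
qed

end

theorem theorem9:
  fixes P :: "((real^'n) \<times> (real^'n^'n)) measure"
    and psi :: "'n::finite \<Rightarrow> 'k::finite"
    and k :: 'k
    and \<Sigma> :: "real^'k^'k"
    and \<sigma>max :: real
  assumes n2: "CARD('n) \<ge> 2"
    and P_prob: "prob_space P"
    and P_borel: "sets P = sets borel"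
    and A_adj: "AE w in P. (\<forall>i j. snd w $ i $ j \<in> {0, 1} \<and> snd w $ i $ j = snd w $ j $ i)"
    and H_inv: "AE w in P. invertible (Hmat psi k (fst w) (snd w))"
    and H_int: "\<And>i j. integrable P (\<lambda>w. matrix_inv (Hmat psi k (fst w) (snd w)) $ i $ j)"
    and Sig: "pos_def \<Sigma>"
    and sig_pos: "\<sigma>max > 0"
  shows "(INF est \<in> borel_measurable borel.
            SUP (b, \<kappa>) \<in> {(b, \<kappa>). noise_ok P psi k \<sigma>max \<kappa>}.
              risk P psi k \<Sigma> est b \<kappa>)
         = ennreal (\<sigma>max\<^sup>2 * trace (\<Sigma> ** mat_expect P (\<lambda>w. matrix_inv (Hmat psi k (fst w) (snd w)))))"
proof -
  interpret S: setting P psi k \<Sigma> \<sigma>max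
    by (simp add: setting_def P_prob P_borel H_inv H_int Sig)
  have G: "(\<lambda>w. matrix_inv (Hmat psi k (fst w) (snd w))) = S.Gw" by (simp add: fun_eq_iff S.Gw_def)
  show ?thesis
  proof (rule antisym)
    show "(INF est \<in> borel_measurable borel.
            SUP (b, \<kappa>) \<in> {(b, \<kappa>). noise_ok P psi k \<sigma>max \<kappa>}. risk P psi k \<Sigma> est b \<kappa>)
         \<le> ennreal (\<sigma>max\<^sup>2 * trace (\<Sigma> ** mat_expect P (\<lambda>w. matrix_inv (Hmat psi k (fst w) (snd w)))))"
      unfolding G
    proof (rule INF_lower2[OF S.est0_meas])
      show "(SUP (b, \<kappa>) \<in> {(b, \<kappa>). noise_ok P psi k \<sigma>max \<kappa>}. risk P psi k \<Sigma> S.est0 b \<kappa>)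
          \<le> ennreal (\<sigma>max\<^sup>2 * trace (\<Sigma> ** mat_expect P S.Gw))"
        by (rule SUP_least) (auto intro: S.upper)
    qed
    show "ennreal (\<sigma>max\<^sup>2 * trace (\<Sigma> ** mat_expect P (\<lambda>w. matrix_inv (Hmat psi k (fst w) (snd w)))))
       \<le> (INF est \<in> borel_measurable borel.
            SUP (b, \<kappa>) \<in> {(b, \<kappa>). noise_ok P psi k \<sigma>max \<kappa>}. risk P psi k \<Sigma> est b \<kappa>)"
      unfolding G by (rule INF_greatest) (rule S.lower)
  qed
qed


end
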